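(* Let $G$ be a topological group. Every numerable principal $G$-bundle over $X_{\mathrm{crs}}$ is trivial. In particular, the nontrivial principal $S^1$-bundles over $X_{\mathrm{crs}}$ (which exist since $H^1(X_{\mathrm{crs}},\mathcal{S}^1_{X_{\mathrm{crs}}})\ne0$) are not numerable.
   Context: Let $X$ be the following 2-dimensional CW-complex. Its 0-cells are $e_n^0$, $n\ge 0$; the point $x=e_0^0$ is called the origin. For each $n\ge1$ there are two 1-cells $e_n^1, e_{-n}^1$, each joining $x$ to $e_n^0$, so that $e_0^0\cup e_n^0\cup e_n^1\cup e_{-n}^1$ is homeomorphic to a circle; for each $n\ge1$ a 2-cell $e_n^2$ is attached via a homeomorphism $\varphi_n:S^1\to e_0^0\cup e_n^0\cup e_n^1\cup e_{-n}^1$. Thus each closed 2-cell $\overline{e_n^2}$ is a closed disk having $x$ and $e_n^0$ on its boundary, and $X$ is a wedge at $x$ of countably many closed disks, carrying the CW (weak) topology. The coarser topology on the set $X$ consists of all subsets $U\subset X$ that are open in the CW-topology and either do not contain $x$, or contain $\overline{e_n^2}\smallsetminus e_n^0$ for all but finitely many $n\ge1$. The set $X$ with this coarser topology is denoted $X_{\mathrm{crs}}$. A principal $G$-bundle $P\to Y$ is numerable if it is trivial over each member of some open covering $(V_\alpha)$ of $Y$ admitting a partition of unity $(f_\beta)$ with $(f_\beta^{-1}(]0,1]))$ locally finite and refining $(V_\alpha)$. $\mathcal{S}^1_{X_{\mathrm{crs}}}$ is the sheaf of continuous $S^1=\mathbb{R}/\mathbb{Z}$-valued functions on $X_{\mathrm{crs}}$.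 *)

theory Defs
  imports "HOL-Analysis.Analysis"
begin

definition topological_group ::
  "'g topology \<Rightarrow> ('g \<Rightarrow> 'g \<Rightarrow> 'g) \<Rightarrow> ('g \<Rightarrow> 'g) \<Rightarrow> 'g \<Rightarrow> bool" where
  "topological_group TG m i e \<longleftrightarrow>
     e \<in> topspace TG \<and>
     (\<forall>a\<in>topspace TG. \<forall>b\<in>topspace TG. m a b \<in> topspace TG) \<and>
     (\<forall>a\<in>topspace TG. \<forall>b\<in>topspace TG. \<forall>c\<in>topspace TG. m (m a b) c = m a (m b c)) \<and>
     (\<forall>a\<in>topspace TG. m e a = a \<and> m a e = a) \<and>
     (\<forall>a\<in>topspace TG. i a \<in> topspace TG \<and> m (i a) a = e \<and> m a (i a) = e) \<and>
     continuous_map (prod_topology TG TG) TG (\<lambda>(a, b). m a b) \<and>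
     continuous_map TG TG i"

definition trivial_over ::
  "'g topology \<Rightarrow> ('g \<Rightarrow> 'g \<Rightarrow> 'g) \<Rightarrow> 'p topology \<Rightarrow> 'y topology \<Rightarrow> ('p \<Rightarrow> 'y)
   \<Rightarrow> ('p \<Rightarrow> 'g \<Rightarrow> 'p) \<Rightarrow> 'y set \<Rightarrow> bool" where
  "trivial_over TG m TP TY p act V \<longleftrightarrow>
     (\<exists>\<phi>. homeomorphic_map (subtopology TP {x \<in> topspace TP. p x \<in> V})
                            (prod_topology (subtopology TY V) TG) \<phi> \<and>
          (\<forall>x\<in>topspace TP. p x \<in> V \<longrightarrow> fst (\<phi> x) = p x) \<and>
          (\<forall>x\<in>topspace TP. p x \<in> V \<longrightarrow> (\<forall>g\<in>topspace TG.
               \<phi> (act x g) = (fst (\<phi> x), m (snd (\<phi> x)) g))))"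

definition principal_bundle ::
  "'g topology \<Rightarrow> ('g \<Rightarrow> 'g \<Rightarrow> 'g) \<Rightarrow> 'g \<Rightarrow> 'p topology \<Rightarrow> 'y topology \<Rightarrow> ('p \<Rightarrow> 'y)
   \<Rightarrow> ('p \<Rightarrow> 'g \<Rightarrow> 'p) \<Rightarrow> bool" where
  "principal_bundle TG m e TP TY p act \<longleftrightarrow>
     continuous_map TP TY p \<and>
     continuous_map (prod_topology TP TG) TP (\<lambda>(x, g). act x g) \<and>
     (\<forall>x\<in>topspace TP. act x e = x) \<and>
     (\<forall>x\<in>topspace TP. \<forall>g\<in>topspace TG. \<forall>h\<in>topspace TG. act (act x g) h = act x (m g h)) \<and>
     (\<forall>x\<in>topspace TP. \<forall>g\<in>topspace TG. p (act x g) = p x) \<and>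
     (\<forall>y\<in>topspace TY. \<exists>U. openin TY U \<and> y \<in> U \<and> trivial_over TG m TP TY p act U)"

definition trivial_bundle ::
  "'g topology \<Rightarrow> ('g \<Rightarrow> 'g \<Rightarrow> 'g) \<Rightarrow> 'p topology \<Rightarrow> 'y topology \<Rightarrow> ('p \<Rightarrow> 'y)
   \<Rightarrow> ('p \<Rightarrow> 'g \<Rightarrow> 'p) \<Rightarrow> bool" where
  "trivial_bundle TG m TP TY p act \<longleftrightarrow> trivial_over TG m TP TY p act (topspace TY)"

definition loc_finite_partition_of_unity_refining ::
  "'y topology \<Rightarrow> ('y \<Rightarrow> real) set \<Rightarrow> 'y set set \<Rightarrow> bool" where
  "loc_finite_partition_of_unity_refining TY F \<V> \<longleftrightarrow>
     (\<forall>f\<in>F. continuous_map TY euclideanreal f \<and>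
             (\<forall>y\<in>topspace TY. 0 \<le> f y \<and> f y \<le> 1)) \<and>
     (\<forall>y\<in>topspace TY. \<exists>W. openin TY W \<and> y \<in> W \<and>
             finite {f\<in>F. \<exists>z\<in>W. 0 < f z}) \<and>
     (\<forall>y\<in>topspace TY. (\<Sum>f\<in>{f\<in>F. f y \<noteq> 0}. f y) = 1) \<and>
     (\<forall>f\<in>F. \<exists>V\<in>\<V>. {y\<in>topspace TY. 0 < f y} \<subseteq> V)"

definition numerable_bundle ::
  "'g topology \<Rightarrow> ('g \<Rightarrow> 'g \<Rightarrow> 'g) \<Rightarrow> 'p topology \<Rightarrow> 'y topology \<Rightarrow> ('p \<Rightarrow> 'y)
   \<Rightarrow> ('p \<Rightarrow> 'g \<Rightarrow> 'p) \<Rightarrow> bool" where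
  "numerable_bundle TG m TP TY p act \<longleftrightarrow>
     (\<exists>\<V> F. (\<forall>V\<in>\<V>. openin TY V \<and> trivial_over TG m TP TY p act V) \<and>
            \<Union>\<V> = topspace TY \<and>
            loc_finite_partition_of_unity_refining TY F \<V>)"

text \<open>Concrete model of X: the n-th closed 2-cell (n \<ge> 1) is the closed unit disk of \<complex>;
  its point 1 is the origin x (represented by (0,0)), its point -1 is the 0-cell e_n^0,
  the two open half circles are the 1-cells e_n^1, e_{-n}^1, and the open disk is e_n^2.
  A point z \<noteq> 1 of the n-th disk is represented by (n, z).\<close>
definition X_origin :: "nat \<times> complex" where
  "X_origin = (0, 0)"

definition X_cell :: "nat \<Rightarrow> complex \<Rightarrow> nat \<times> complex" where
  "X_cell n z = (if z = 1 then X_origin else (n, z))"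

definition X_set :: "(nat \<times> complex) set" where
  "X_set = {X_origin} \<union> {(n, z) | n z. 1 \<le> n \<and> z \<in> cball 0 1 \<and> z \<noteq> 1}"

text \<open>CW (weak) topology: U is open iff its preimage in every closed 2-cell is open.\<close>
definition X_cw_open :: "(nat \<times> complex) set \<Rightarrow> bool" where
  "X_cw_open U \<longleftrightarrow> U \<subseteq> X_set \<and>
     (\<forall>n\<ge>1. openin (top_of_set (cball 0 1)) {z \<in> cball 0 1. X_cell n z \<in> U})"

definition X_cw :: "(nat \<times> complex) topology" where
  "X_cw = topology X_cw_open"

text \<open>closure(e_n^2) minus e_n^0.\<close>
definition X_closed_cell_minus_vertex :: "nat \<Rightarrow> (nat \<times> complex) set" where
  "X_closed_cell_minus_vertex n = X_cell n ` (cball 0 1 - {-1})"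

definition X_crs :: "(nat \<times> complex) topology" where
  "X_crs = topology (\<lambda>U. X_cw_open U \<and>
      (X_origin \<notin> U \<or> finite {n. 1 \<le> n \<and> \<not> X_closed_cell_minus_vertex n \<subseteq> U}))"

section \<open>The circle group S^1 = \<real>/\<int>, modelled as the unit circle of \<complex>\<close>

definition S1_top :: "complex topology" where
  "S1_top = top_of_set (sphere 0 1)"

end

theory Submission
  imports Defs
begin

lemma cm_mult:
  assumes "continuous_map (prod_topology TG TG) TG (\<lambda>(a, b). m a b)"
    "continuous_map Z TG f" "continuous_map Z TG g"
  shows "continuous_map Z TG (\<lambda>z. m (f z) (g z))"
  using continuous_map_compose[OF continuous_map_pairedI[OF assms(2,3)] assms(1)]
  by (simp add: o_def)


lemma norm_pair_le: "norm ((u::real, v::real)) \<le> \<bar>u\<bar> + \<bar>v\<bar>"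
  by (simp add: norm_Pair sqrt_sum_squares_le_sum_abs)
lemma sq_diam:
  fixes c d h :: real assumes "0 \<le> h"
  shows "diameter ({c..c+h} \<times> {d..d+h}) \<le> 2*h"
proof (rule diameter_le)
  show "{c..c+h} \<times> {d..d+h} \<noteq> {} \<or> 0 \<le> 2*h" using assms by simp
  fix x y assume x: "x \<in> {c..c+h} \<times> {d..d+h}" and y: "y \<in> {c..c+h} \<times> {d..d+h}"
  obtain x1 x2 y1 y2 where xy: "x = (x1,x2)" "y = (y1,y2)" by fastforce
  have "norm (x - y) = norm (x1 - y1, x2 - y2)" using xy by simp
  also have "\<dots> \<le> \<bar>x1 - y1\<bar> + \<bar>x2 - y2\<bar>" by (rule norm_pair_le)
  also have "\<dots> \<le> h + h" using x y xy by (intro add_mono) (auto simp: abs_le_iff)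
  finally show "norm (x - y) \<le> 2*h" by simp
qed
lemma ivl_un: "(0::real) \<le> u \<Longrightarrow> 0 \<le> h \<Longrightarrow> {0..u} \<union> {u..u+h} = {0..u+h}" by auto

definition "Pcrs U \<longleftrightarrow> X_cw_open U \<and>
      (X_origin \<notin> U \<or> finite {n. 1 \<le> n \<and> \<not> X_closed_cell_minus_vertex n \<subseteq> U})"

lemma istop_Pcrs: "istopology Pcrs"
  unfolding istopology_def
proof (intro conjI allI impI)
  fix S T assume S: "Pcrs S" and T: "Pcrs T"
  have "X_cw_open (S \<inter> T)"
    unfolding X_cw_open_def
  proof (intro conjI allI impI)
    show "S \<inter> T \<subseteq> X_set" using S unfolding Pcrs_def X_cw_open_def by blast
    fix n :: nat assume n: "1 \<le> n"
    have "{z \<in> cball 0 1. X_cell n z \<in> S \<inter> T} = {z \<in> cball 0 1. X_cell n z \<in> S} \<inter> {z \<in> cball 0 1. X_cell n z \<in> T}"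
      by blast
    then show "openin (top_of_set (cball 0 1)) {z \<in> cball 0 1. X_cell n z \<in> S \<inter> T}"
      using S T n unfolding Pcrs_def X_cw_open_def by (simp add: openin_Int)
  qed
  moreover have "X_origin \<notin> S \<inter> T \<or> finite {n. 1 \<le> n \<and> \<not> X_closed_cell_minus_vertex n \<subseteq> S \<inter> T}"
  proof (cases "X_origin \<in> S \<inter> T")
    case True
    then have f1: "finite {n. 1 \<le> n \<and> \<not> X_closed_cell_minus_vertex n \<subseteq> S}"
      and f2: "finite {n. 1 \<le> n \<and> \<not> X_closed_cell_minus_vertex n \<subseteq> T}"
      using S T unfolding Pcrs_def by auto
    have "{n. 1 \<le> n \<and> \<not> X_closed_cell_minus_vertex n \<subseteq> S \<inter> T} \<subseteq>
        {n. 1 \<le> n \<and> \<not> X_closed_cell_minus_vertex n \<subseteq> S} \<union> {n. 1 \<le> n \<and> \<not> X_closed_cell_minus_vertex n \<subseteq> T}"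
      by blast
    then show ?thesis using f1 f2 finite_subset by blast
  qed simp
  ultimately show "Pcrs (S \<inter> T)" unfolding Pcrs_def by blast
next
  fix K assume K: "\<forall>S\<in>K. Pcrs S"
  have "X_cw_open (\<Union>K)"
    unfolding X_cw_open_def
  proof (intro conjI allI impI)
    show "\<Union>K \<subseteq> X_set" using K unfolding Pcrs_def X_cw_open_def by blast
    fix n :: nat assume n: "1 \<le> n"
    have "{z \<in> cball 0 1. X_cell n z \<in> \<Union>K} = \<Union>((\<lambda>S. {z \<in> cball 0 1. X_cell n z \<in> S}) ` K)"
      by blast
    moreover have "openin (top_of_set (cball 0 1)) (\<Union>((\<lambda>S. {z \<in> cball 0 1. X_cell n z \<in> S}) ` K))"
      using K n unfolding Pcrs_def X_cw_open_def by (intro openin_Union) blast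
    ultimately show "openin (top_of_set (cball 0 1)) {z \<in> cball 0 1. X_cell n z \<in> \<Union>K}" by simp
  qed
  moreover have "X_origin \<notin> \<Union>K \<or> finite {n. 1 \<le> n \<and> \<not> X_closed_cell_minus_vertex n \<subseteq> \<Union>K}"
  proof (cases "X_origin \<in> \<Union>K")
    case True
    then obtain S where S: "S \<in> K" "X_origin \<in> S" by blast
    then have f1: "finite {n. 1 \<le> n \<and> \<not> X_closed_cell_minus_vertex n \<subseteq> S}"
      using K unfolding Pcrs_def by auto
    have "{n. 1 \<le> n \<and> \<not> X_closed_cell_minus_vertex n \<subseteq> \<Union>K} \<subseteq> {n. 1 \<le> n \<and> \<not> X_closed_cell_minus_vertex n \<subseteq> S}"
      using S by blast
    then show ?thesis using f1 finite_subset by blast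
  qed simp
  ultimately show "Pcrs (\<Union>K)" unfolding Pcrs_def by blast
qed

lemma openin_crs: "openin X_crs U \<longleftrightarrow> Pcrs U"
proof -
  have "X_crs = topology Pcrs" unfolding X_crs_def Pcrs_def by simp
  then show ?thesis using topology_inverse'[OF istop_Pcrs] by simp
qed

lemma X_cell_in: "1 \<le> n \<Longrightarrow> z \<in> cball 0 1 \<Longrightarrow> X_cell n z \<in> X_set"
  unfolding X_cell_def X_set_def by auto

lemma X_cell_ne: "1 \<le> n \<Longrightarrow> z \<noteq> 1 \<Longrightarrow> X_cell n z = (n, z)"
  unfolding X_cell_def by simp

lemma X_cell_1: "X_cell n 1 = X_origin"
  unfolding X_cell_def by simp

lemma X_cell_origin_iff: "1 \<le> n \<Longrightarrow> X_cell n z = X_origin \<longleftrightarrow> z = 1"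
  unfolding X_cell_def X_origin_def by auto

lemma topspace_crs: "topspace X_crs = X_set"
proof
  show "topspace X_crs \<subseteq> X_set"
    unfolding topspace_def openin_crs Pcrs_def X_cw_open_def by blast
  have e1: "{n. 1 \<le> n \<and> \<not> X_closed_cell_minus_vertex n \<subseteq> X_set} = {}"
    unfolding X_closed_cell_minus_vertex_def using X_cell_in by blast
  have e2: "\<And>n. 1 \<le> n \<Longrightarrow> {z \<in> cball 0 1. X_cell n z \<in> X_set} = cball 0 1" using X_cell_in by blast
  have "Pcrs X_set"
    unfolding Pcrs_def X_cw_open_def e1 using e2 by simp
  then show "X_set \<subseteq> topspace X_crs" unfolding topspace_def openin_crs by blast
qed

lemma cont_cell: "1 \<le> n \<Longrightarrow> continuous_map (top_of_set (cball 0 1)) X_crs (X_cell n)"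
  unfolding continuous_map_def topspace_crs openin_crs Pcrs_def X_cw_open_def
  using X_cell_in by auto

definition "Dn n = X_cell n ` cball 0 1"

definition "Xinv w = (if w = X_origin then 1 else snd w)"

lemma Xinv_cell: "1 \<le> n \<Longrightarrow> Xinv (X_cell n z) = z"
  unfolding Xinv_def X_cell_def X_origin_def by auto

lemma Dn_mem: "1 \<le> n \<Longrightarrow> w \<in> Dn n \<Longrightarrow> X_cell n (Xinv w) = w \<and> Xinv w \<in> cball 0 1"
  unfolding Dn_def using Xinv_cell by auto

lemma origin_Dn: "X_origin \<in> Dn n"
proof -
  have "(1::complex) \<in> cball 0 1" by simp
  then show ?thesis unfolding Dn_def by (rule image_eqI[rotated]) (simp add: X_cell_1)
qed

lemma Dn_sub: "1 \<le> n \<Longrightarrow> Dn n \<subseteq> X_set"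
  unfolding Dn_def using X_cell_in by blast

lemma cell_in_Dn: "1 \<le> m \<Longrightarrow> 1 \<le> n \<Longrightarrow> X_cell m z \<in> Dn n \<longleftrightarrow> (z = 1 \<or> m = n \<and> z \<in> cball 0 1)"
proof (cases "z = 1")
  case True then show ?thesis using origin_Dn X_cell_1 by simp
next
  case False
  assume m: "1 \<le> m" and n: "1 \<le> n"
  show ?thesis
  proof
    assume "X_cell m z \<in> Dn n"
    then obtain u where u: "u \<in> cball 0 1" "X_cell m z = X_cell n u" unfolding Dn_def by blast
    then have "z = u" using Xinv_cell[OF m, of z] Xinv_cell[OF n, of u] by simp
    then show "z = 1 \<or> m = n \<and> z \<in> cball 0 1" using u False X_cell_ne[OF m False] X_cell_ne[OF n False] by simp
  next
    assume "z = 1 \<or> m = n \<and> z \<in> cball 0 1"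
    then show "X_cell m z \<in> Dn n" using False unfolding Dn_def by blast
  qed
qed

lemma openin_ball_delete: "openin (top_of_set (cball (0::complex) 1)) (cball 0 1 - {a})"
proof -
  have "open (- {a})" by (simp add: open_Compl)
  then have "openin (top_of_set (cball (0::complex) 1)) (cball 0 1 \<inter> - {a})" by (rule openin_open_Int)
  then show ?thesis by (simp add: Diff_eq)
qed

lemma Dn_closed: assumes n: "1 \<le> n" shows "closedin X_crs (Dn n)"
  unfolding closedin_def topspace_crs
proof
  show "Dn n \<subseteq> X_set" by (rule Dn_sub[OF n])
  show "openin X_crs (X_set - Dn n)"
    unfolding openin_crs Pcrs_def X_cw_open_def
  proof (intro conjI allI impI disjI1)
    fix m :: nat assume m: "1 \<le> m"
    have "{z \<in> cball 0 1. X_cell m z \<in> X_set - Dn n} = (if m = n then {} else cball 0 1 - {1})"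
      using cell_in_Dn[OF m n] X_cell_in[OF m] by auto
    then show "openin (top_of_set (cball 0 1)) {z \<in> cball 0 1. X_cell m z \<in> X_set - Dn n}"
      using openin_ball_delete by simp
  next
    show "X_origin \<notin> X_set - Dn n" using origin_Dn by blast
  qed blast
qed

definition "C0 N = X_set - (\<Union>n\<in>N. Dn n - {X_origin})"

lemma C0_closed: assumes N: "\<forall>n\<in>N. 1 \<le> n" shows "closedin X_crs (C0 N)"
  unfolding closedin_def topspace_crs
proof
  show "C0 N \<subseteq> X_set" unfolding C0_def by blast
  have eq: "X_set - C0 N = (\<Union>n\<in>N. Dn n - {X_origin})" unfolding C0_def using Dn_sub N by blast
  show "openin X_crs (X_set - C0 N)"
    unfolding openin_crs Pcrs_def X_cw_open_def eq
  proof (intro conjI allI impI disjI1)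
    show "(\<Union>n\<in>N. Dn n - {X_origin}) \<subseteq> X_set" using Dn_sub N by blast
    fix m :: nat assume m: "1 \<le> m"
    have "{z \<in> cball 0 1. X_cell m z \<in> (\<Union>n\<in>N. Dn n - {X_origin})} = (if m \<in> N then cball 0 1 - {1} else {})"
      using cell_in_Dn[OF m] X_cell_origin_iff[OF m] N by auto
    then show "openin (top_of_set (cball 0 1)) {z \<in> cball 0 1. X_cell m z \<in> (\<Union>n\<in>N. Dn n - {X_origin})}"
      using openin_ball_delete by simp
  next
    show "X_origin \<notin> (\<Union>n\<in>N. Dn n - {X_origin})" by blast
  qed
qed


lemma cont_Xinv:
  assumes n: "1 \<le> n"
  shows "continuous_map (subtopology X_crs (Dn n)) (top_of_set (cball 0 1)) Xinv"
  unfolding continuous_map_def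
proof (intro conjI allI impI)
  have ts: "topspace (subtopology X_crs (Dn n)) = Dn n" using Dn_sub[OF n] by (simp add: topspace_crs Int_absorb1)
  show "Xinv \<in> topspace (subtopology X_crs (Dn n)) \<rightarrow> topspace (top_of_set (cball 0 1))"
    unfolding ts using Dn_mem[OF n] by auto
  fix U :: "complex set" assume U: "openin (top_of_set (cball 0 1)) U"
  have Ucb: "U \<subseteq> cball 0 1" using openin_subset[OF U] by simp
  define T where "T = X_cell n ` U \<union> (if 1 \<in> U then X_set - Dn n else {})"
  have inj: "\<And>u v. X_cell n u = X_cell n v \<Longrightarrow> u = v" using Xinv_cell[OF n] by metis
  have PT: "Pcrs T"
    unfolding Pcrs_def X_cw_open_def
  proof (intro conjI allI impI)
    show "T \<subseteq> X_set" unfolding T_def using X_cell_in[OF n] Ucb by auto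
    fix m :: nat assume m: "1 \<le> m"
    show "openin (top_of_set (cball 0 1)) {z \<in> cball 0 1. X_cell m z \<in> T}"
    proof (cases "m = n")
      case True
      have "{z \<in> cball 0 1. X_cell m z \<in> T} = U"
      proof -
        have "X_cell n z \<in> X_cell n ` U \<longleftrightarrow> z \<in> U" for z using inj by blast
        moreover have "z \<in> cball 0 1 \<Longrightarrow> X_cell n z \<notin> X_set - Dn n" for z unfolding Dn_def by blast
        ultimately show ?thesis unfolding T_def True using Ucb by auto
      qed
      then show ?thesis using U by simp
    next
      case False
      have a: "X_cell m z \<in> X_cell n ` U \<longleftrightarrow> z = 1 \<and> 1 \<in> U" for z
      proof
        assume "X_cell m z \<in> X_cell n ` U"
        then obtain u where u: "u \<in> U" "X_cell m z = X_cell n u" by blast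
        then have zu: "z = u" using Xinv_cell[OF m, of z] Xinv_cell[OF n, of u] by simp
        have "z = 1"
        proof (rule ccontr)
          assume "z \<noteq> 1"
          then show False using u(2) zu X_cell_ne[OF m] X_cell_ne[OF n] False by simp
        qed
        then show "z = 1 \<and> 1 \<in> U" using u zu by simp
      next
        assume "z = 1 \<and> 1 \<in> U"
        then show "X_cell m z \<in> X_cell n ` U" using X_cell_1 by (metis image_eqI)
      qed
      have b: "z \<in> cball 0 1 \<Longrightarrow> X_cell m z \<in> X_set - Dn n \<longleftrightarrow> z \<noteq> 1" for z
        using cell_in_Dn[OF m n] X_cell_in[OF m] False by auto
      show ?thesis
      proof (cases "1 \<in> U")
        case True
        have "{z \<in> cball 0 1. X_cell m z \<in> T} = cball 0 1"
        proof (intro set_eqI iffI)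
          fix z :: complex assume z: "z \<in> cball 0 1"
          have "X_cell m z \<in> T"
          proof (cases "z = 1")
            case True
            then show ?thesis unfolding T_def using a \<open>1 \<in> U\<close> by blast
          next
            case False
            then show ?thesis unfolding T_def using b[OF z] \<open>1 \<in> U\<close> by simp
          qed
          then show "z \<in> {z \<in> cball 0 1. X_cell m z \<in> T}" using z by blast
        qed blast
        then show ?thesis by simp
      next
        case False
        have "{z \<in> cball 0 1. X_cell m z \<in> T} = {}" unfolding T_def using a False by auto
        then show ?thesis by (simp only: openin_empty)
      qed
    qed
  next
    have "finite {m. 1 \<le> m \<and> \<not> X_closed_cell_minus_vertex m \<subseteq> T}" if o: "X_origin \<in> T"
    proof -
      have "X_origin \<notin> X_set - Dn n" using origin_Dn by blast
      then have "X_origin \<in> X_cell n ` U" using o unfolding T_def by (auto split: if_splits)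
      then obtain u where "u \<in> U" "X_origin = X_cell n u" by (rule imageE)
      then have oneU: "1 \<in> U" using X_cell_origin_iff[OF n, of u] by simp
      have "{m. 1 \<le> m \<and> \<not> X_closed_cell_minus_vertex m \<subseteq> T} \<subseteq> {n}"
      proof
        fix m assume "m \<in> {m. 1 \<le> m \<and> \<not> X_closed_cell_minus_vertex m \<subseteq> T}"
        then have m: "1 \<le> m" and nsub: "\<not> X_closed_cell_minus_vertex m \<subseteq> T" by auto
        show "m \<in> {n}"
        proof (rule ccontr)
          assume mn: "m \<notin> {n}"
          have "X_closed_cell_minus_vertex m \<subseteq> T"
          proof
            fix w assume "w \<in> X_closed_cell_minus_vertex m"
            then obtain z where z: "z \<in> cball 0 1" "w = X_cell m z" unfolding X_closed_cell_minus_vertex_def by blast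
            show "w \<in> T"
            proof (cases "z = 1")
              case True
              then have "w = X_cell n 1" using z X_cell_1 by simp
              then show ?thesis unfolding T_def using oneU by blast
            next
              case False
              then have "w \<in> X_set - Dn n" using z cell_in_Dn[OF m n] X_cell_in[OF m] mn by auto
              then show ?thesis unfolding T_def using oneU by simp
            qed
          qed
          then show False using nsub by blast
        qed
      qed
      then show ?thesis using finite_subset by blast
    qed
    then show "X_origin \<notin> T \<or> finite {m. 1 \<le> m \<and> \<not> X_closed_cell_minus_vertex m \<subseteq> T}" by blast
  qed
  have eqT: "{x \<in> topspace (subtopology X_crs (Dn n)). Xinv x \<in> U} = T \<inter> Dn n"
  proof -
    have "x \<in> T \<longleftrightarrow> Xinv x \<in> U" if x: "x \<in> Dn n" for x
    proof -
      have xx: "X_cell n (Xinv x) = x" "Xinv x \<in> cball 0 1" using Dn_mem[OF n x] by auto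
      have "x \<notin> X_set - Dn n" using x by blast
      then have "x \<in> T \<longleftrightarrow> x \<in> X_cell n ` U" unfolding T_def by auto
      also have "\<dots> \<longleftrightarrow> Xinv x \<in> U" using xx inj by (metis image_iff)
      finally show ?thesis .
    qed
    then show ?thesis unfolding ts by blast
  qed
  show "openin (subtopology X_crs (Dn n)) {x \<in> topspace (subtopology X_crs (Dn n)). Xinv x \<in> U}"
    unfolding eqT openin_subtopology using PT openin_crs by blast
qed

lemma support_cells:
  assumes fc: "continuous_map X_crs euclideanreal f" and pos: "0 < f X_origin"
  obtains N where "finite N" "\<And>n w. 1 \<le> n \<Longrightarrow> n \<notin> N \<Longrightarrow> w \<in> Dn n \<Longrightarrow> f X_origin / 2 \<le> f w"
proof -
  define c where "c = f X_origin / 2"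
  define W where "W = {w \<in> topspace X_crs. f w \<in> {c<..}}"
  have "openin X_crs W" unfolding W_def
    by (rule openin_continuous_map_preimage[OF fc]) simp
  then have PW: "Pcrs W" using openin_crs by blast
  have oW: "X_origin \<in> W" unfolding W_def c_def topspace_crs X_set_def using pos by simp
  define N where "N = {n. 1 \<le> n \<and> \<not> X_closed_cell_minus_vertex n \<subseteq> W}"
  have fin: "finite N" using PW oW unfolding Pcrs_def N_def by blast
  have "c \<le> f w" if n: "1 \<le> n" and nN: "n \<notin> N" and w: "w \<in> Dn n" for n w
  proof -
    have sub: "X_closed_cell_minus_vertex n \<subseteq> W" using n nN unfolding N_def by blast
    define \<phi> where "\<phi> z = f (X_cell n z)" for z
    have "continuous_map (top_of_set (cball 0 1)) euclideanreal (f \<circ> X_cell n)"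
      by (rule continuous_map_compose[OF cont_cell[OF n] fc])
    then have phic: "continuous_on (cball 0 1) \<phi>" unfolding \<phi>_def o_def by simp
    have "c \<le> \<phi> z" if z: "z \<in> ball 0 1" for z
    proof -
      have "z \<in> cball 0 1 - {-1}" using z by auto
      then have "X_cell n z \<in> W" using sub unfolding X_closed_cell_minus_vertex_def by blast
      then show ?thesis unfolding W_def \<phi>_def by simp
    qed
    moreover have "Xinv w \<in> closure (ball 0 1)" using Dn_mem[OF n w] by simp
    moreover have "continuous_on (closure (ball (0::complex) 1)) \<phi>" using phic by simp
    ultimately have "c \<le> \<phi> (Xinv w)" using continuous_ge_on_closure by blast
    then show ?thesis unfolding \<phi>_def using Dn_mem[OF n w] by simp
  qed
  then show ?thesis using that fin unfolding c_def by blast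
qed



lemma Dn_char: "1 \<le> n \<Longrightarrow> x \<in> Dn n \<Longrightarrow> x = X_origin \<or> fst x = n"
  unfolding Dn_def X_cell_def by auto

lemma X_set_char: "x \<in> X_set \<Longrightarrow> x = X_origin \<or> (\<exists>m z. x = X_cell m z \<and> 1 \<le> m \<and> z \<in> cball 0 1 \<and> z \<noteq> 1)"
  unfolding X_set_def X_cell_def by auto

lemma square_disk: "\<exists>hm hm'. homeomorphism ({0..1::real} \<times> {0..1::real}) (cball (0::complex) 1) hm hm'"
proof -
  have "({0..1::real} \<times> {0..1::real}) homeomorphic (cball (0::complex) 1)"
  proof (rule homeomorphic_convex_compact_sets)
    show "convex ({0..1::real} \<times> {0..1::real})" by (intro convex_Times convex_real_interval)
    show "compact ({0..1::real} \<times> {0..1::real})" by (intro compact_Times compact_Icc)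
    show "convex (cball (0::complex) 1)" by simp
    show "compact (cball (0::complex) 1)" by simp
    have "interior ({0..1::real} \<times> {0..1::real}) \<noteq> {}"
    proof -
      have "(1/2, 1/2) \<in> interior ({0..1::real} \<times> {0..1::real})"
        by (simp add: interior_Times)
      then show ?thesis by blast
    qed
    then have "aff_dim ({0..1::real} \<times> {0..1::real}) = int DIM(real \<times> real)"
      by (rule aff_dim_nonempty_interior)
    moreover have "aff_dim (cball (0::complex) 1) = int DIM(complex)" by (rule aff_dim_cball) simp
    ultimately show "aff_dim ({0..1::real} \<times> {0..1::real}) = aff_dim (cball (0::complex) 1)" by simp
  qed
  then show ?thesis unfolding homeomorphic_def by blast
qed

locale pbundle =
  fixes TG :: "'g topology" and m :: "'g \<Rightarrow> 'g \<Rightarrow> 'g" and i :: "'g \<Rightarrow> 'g" and e :: 'g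
    and TP :: "'p topology" and TY :: "'y topology" and p :: "'p \<Rightarrow> 'y" and act :: "'p \<Rightarrow> 'g \<Rightarrow> 'p"
  assumes grp: "topological_group TG m i e" and pb: "principal_bundle TG m e TP TY p act"
begin

abbreviation "G \<equiv> topspace TG"

lemma e_in: "e \<in> G" and m_in: "a \<in> G \<Longrightarrow> b \<in> G \<Longrightarrow> m a b \<in> G"
  and assoc: "a \<in> G \<Longrightarrow> b \<in> G \<Longrightarrow> c \<in> G \<Longrightarrow> m (m a b) c = m a (m b c)"
  and unitl: "a \<in> G \<Longrightarrow> m e a = a" and unitr: "a \<in> G \<Longrightarrow> m a e = a"
  and inv_in: "a \<in> G \<Longrightarrow> i a \<in> G" and invl: "a \<in> G \<Longrightarrow> m (i a) a = e"
  and invr: "a \<in> G \<Longrightarrow> m a (i a) = e"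
  and cont_m: "continuous_map (prod_topology TG TG) TG (\<lambda>(a, b). m a b)"
  and cont_i: "continuous_map TG TG i"
  using grp unfolding topological_group_def by blast+

lemma cont_p: "continuous_map TP TY p"
  and cont_act: "continuous_map (prod_topology TP TG) TP (\<lambda>(x, g). act x g)"
  and act_e: "x \<in> topspace TP \<Longrightarrow> act x e = x"
  and act_act: "x \<in> topspace TP \<Longrightarrow> g \<in> G \<Longrightarrow> h \<in> G \<Longrightarrow> act (act x g) h = act x (m g h)"
  and p_act: "x \<in> topspace TP \<Longrightarrow> g \<in> G \<Longrightarrow> p (act x g) = p x"
  and loctriv: "y \<in> topspace TY \<Longrightarrow> \<exists>U. openin TY U \<and> y \<in> U \<and> trivial_over TG m TP TY p act U"
  using pb unfolding principal_bundle_def by blast+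

lemma p_in: "x \<in> topspace TP \<Longrightarrow> p x \<in> topspace TY"
  using continuous_map_image_subset_topspace[OF cont_p] by blast

lemma act_in: "x \<in> topspace TP \<Longrightarrow> g \<in> G \<Longrightarrow> act x g \<in> topspace TP"
proof -
  assume a: "x \<in> topspace TP" "g \<in> G"
  have "(\<lambda>(x, g). act x g) ` (topspace TP \<times> G) \<subseteq> topspace TP"
    using continuous_map_image_subset_topspace[OF cont_act] by simp
  then show ?thesis using a by blast
qed

lemma cm_m: "continuous_map Z TG f \<Longrightarrow> continuous_map Z TG g \<Longrightarrow> continuous_map Z TG (\<lambda>z. m (f z) (g z))"
  by (rule cm_mult[OF cont_m])

lemma cm_act: "continuous_map Z TP f \<Longrightarrow> continuous_map Z TG g \<Longrightarrow> continuous_map Z TP (\<lambda>z. act (f z) (g z))"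
  using continuous_map_compose[OF continuous_map_pairedI cont_act]
  by (simp add: o_def)

lemma cm_i: "continuous_map Z TG f \<Longrightarrow> continuous_map Z TG (\<lambda>z. i (f z))"
  using continuous_map_compose[OF _ cont_i] by (simp add: o_def)

lemma cancel_left: "a \<in> G \<Longrightarrow> g \<in> G \<Longrightarrow> h \<in> G \<Longrightarrow> m a g = m a h \<Longrightarrow> g = h"
proof -
  assume a: "a \<in> G" "g \<in> G" "h \<in> G" "m a g = m a h"
  have "g = m (m (i a) a) g" using invl[OF a(1)] unitl[OF a(2)] by simp
  also have "\<dots> = m (i a) (m a g)" using assoc[OF inv_in[OF a(1)] a(1) a(2)] .
  also have "\<dots> = m (i a) (m a h)" using a(4) by simp
  also have "\<dots> = m (m (i a) a) h" using assoc[OF inv_in[OF a(1)] a(1) a(3)] by simp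
  also have "\<dots> = h" using invl[OF a(1)] unitl[OF a(3)] by simp
  finally show "g = h" .
qed

definition "PV V = {x \<in> topspace TP. p x \<in> V}"

lemma triv_obtain:
  assumes "trivial_over TG m TP TY p act V"
  obtains \<psi> \<psi>' where "homeomorphic_maps (subtopology TP (PV V)) (prod_topology (subtopology TY V) TG) \<psi> \<psi>'"
    "\<And>x. x \<in> PV V \<Longrightarrow> fst (\<psi> x) = p x"
    "\<And>x g. x \<in> PV V \<Longrightarrow> g \<in> G \<Longrightarrow> \<psi> (act x g) = (fst (\<psi> x), m (snd (\<psi> x)) g)"
proof -
  obtain \<phi> where h: "homeomorphic_map (subtopology TP {x \<in> topspace TP. p x \<in> V})
                            (prod_topology (subtopology TY V) TG) \<phi>"
          and a: "\<forall>x\<in>topspace TP. p x \<in> V \<longrightarrow> fst (\<phi> x) = p x"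
          and b: "\<forall>x\<in>topspace TP. p x \<in> V \<longrightarrow> (\<forall>g\<in>topspace TG.
               \<phi> (act x g) = (fst (\<phi> x), m (snd (\<phi> x)) g))"
    using assms unfolding trivial_over_def by blast
  obtain \<phi>' where "homeomorphic_maps (subtopology TP (PV V)) (prod_topology (subtopology TY V) TG) \<phi> \<phi>'"
    using h unfolding homeomorphic_map_maps PV_def by blast
  moreover have "\<And>x. x \<in> PV V \<Longrightarrow> fst (\<phi> x) = p x" using a unfolding PV_def by blast
  moreover have "\<And>x g. x \<in> PV V \<Longrightarrow> g \<in> G \<Longrightarrow> \<phi> (act x g) = (fst (\<phi> x), m (snd (\<phi> x)) g)"
    using b unfolding PV_def by blast
  ultimately show ?thesis using that by blast
qed

lemma triv_facts:
  assumes "homeomorphic_maps (subtopology TP (PV V)) (prod_topology (subtopology TY V) TG) \<psi> \<psi>'"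
    "\<forall>x\<in>PV V. fst (\<psi> x) = p x"
  shows "\<And>x. x \<in> PV V \<Longrightarrow> \<psi> x \<in> (topspace TY \<inter> V) \<times> G"
    "\<And>x. x \<in> PV V \<Longrightarrow> \<psi>' (\<psi> x) = x"
    "\<And>y g. y \<in> topspace TY \<Longrightarrow> y \<in> V \<Longrightarrow> g \<in> G \<Longrightarrow> \<psi>' (y, g) \<in> PV V"
    "\<And>y g. y \<in> topspace TY \<Longrightarrow> y \<in> V \<Longrightarrow> g \<in> G \<Longrightarrow> \<psi> (\<psi>' (y, g)) = (y, g)"
    "\<And>y g. y \<in> topspace TY \<Longrightarrow> y \<in> V \<Longrightarrow> g \<in> G \<Longrightarrow> p (\<psi>' (y, g)) = y"
proof -
  have tsP: "topspace (subtopology TP (PV V)) = PV V" by (auto simp: PV_def)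
  have tsQ: "topspace (prod_topology (subtopology TY V) TG) = (topspace TY \<inter> V) \<times> G" by simp
  note h = assms(1)[unfolded homeomorphic_maps_def tsP tsQ]
  have c1: "\<psi> ` PV V \<subseteq> (topspace TY \<inter> V) \<times> G"
    using continuous_map_image_subset_topspace[OF conjunct1[OF assms(1)[unfolded homeomorphic_maps_def]]] tsP tsQ by simp
  have c2: "\<psi>' ` ((topspace TY \<inter> V) \<times> G) \<subseteq> PV V"
    using continuous_map_image_subset_topspace[OF conjunct1[OF conjunct2[OF assms(1)[unfolded homeomorphic_maps_def]]]] tsP tsQ by simp
  show 1: "\<And>x. x \<in> PV V \<Longrightarrow> \<psi> x \<in> (topspace TY \<inter> V) \<times> G"
    using c1 by blast
  show "\<And>x. x \<in> PV V \<Longrightarrow> \<psi>' (\<psi> x) = x" using h by blast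
  show 3: "\<And>y g. y \<in> topspace TY \<Longrightarrow> y \<in> V \<Longrightarrow> g \<in> G \<Longrightarrow> \<psi>' (y, g) \<in> PV V"
    using c2 by blast
  show 4: "\<And>y g. y \<in> topspace TY \<Longrightarrow> y \<in> V \<Longrightarrow> g \<in> G \<Longrightarrow> \<psi> (\<psi>' (y, g)) = (y, g)"
    using h by blast
  show "\<And>y g. y \<in> topspace TY \<Longrightarrow> y \<in> V \<Longrightarrow> g \<in> G \<Longrightarrow> p (\<psi>' (y, g)) = y"
    by (metis 3 4 assms(2)[rule_format] fst_conv)
qed

lemma fiber_ex1:
  assumes x: "x \<in> topspace TP" and y: "y \<in> topspace TP" and pxy: "p x = p y"
  shows "\<exists>!g. g \<in> G \<and> act x g = y"
proof -
  obtain U where U: "openin TY U" "p x \<in> U" "trivial_over TG m TP TY p act U"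
    using loctriv p_in x by blast
  obtain \<psi> \<psi>' where h: "homeomorphic_maps (subtopology TP (PV U)) (prod_topology (subtopology TY U) TG) \<psi> \<psi>'"
    and fs: "\<And>x. x \<in> PV U \<Longrightarrow> fst (\<psi> x) = p x"
    and eq: "\<And>x g. x \<in> PV U \<Longrightarrow> g \<in> G \<Longrightarrow> \<psi> (act x g) = (fst (\<psi> x), m (snd (\<psi> x)) g)"
    using triv_obtain[OF U(3)] by blast
  have fs': "\<forall>x\<in>PV U. fst (\<psi> x) = p x" using fs by blast
  note tf = triv_facts[OF h fs']
  have xU: "x \<in> PV U" and yU: "y \<in> PV U" using x y U pxy by (auto simp: PV_def)
  define a where "a = snd (\<psi> x)"
  define b where "b = snd (\<psi> y)"
  have aG: "a \<in> G" using tf(1)[OF xU] unfolding a_def by (simp add: mem_Times_iff)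
  have bG: "b \<in> G" using tf(1)[OF yU] unfolding b_def by (simp add: mem_Times_iff)
  have px: "\<psi> x = (p x, a)" unfolding a_def using fs[OF xU] by (simp add: prod_eq_iff)
  have py: "\<psi> y = (p x, b)" unfolding b_def using fs[OF yU] pxy by (simp add: prod_eq_iff)
  have inj: "\<And>u v. u \<in> PV U \<Longrightarrow> v \<in> PV U \<Longrightarrow> \<psi> u = \<psi> v \<Longrightarrow> u = v"
  proof -
    fix u v assume uv: "u \<in> PV U" "v \<in> PV U" "\<psi> u = \<psi> v"
    have "u = \<psi>' (\<psi> u)" using tf(2)[OF uv(1)] by (rule sym)
    also have "\<dots> = \<psi>' (\<psi> v)" using uv(3) by (rule arg_cong)
    also have "\<dots> = v" using tf(2)[OF uv(2)] .
    finally show "u = v" .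
  qed
  have actU: "\<And>g. g \<in> G \<Longrightarrow> act x g \<in> PV U"
  proof -
    fix g assume "g \<in> G"
    then show "act x g \<in> PV U" using xU act_in[OF x] p_act[OF x] unfolding PV_def by simp
  qed
  have iaG: "i a \<in> G" using inv_in[OF aG] .
  have iabG: "m (i a) b \<in> G" using m_in[OF iaG bG] .
  have key: "m a (m (i a) b) = b"
    using assoc[OF aG iaG bG] invr[OF aG] unitl[OF bG] by simp
  show ?thesis
  proof (rule ex1I[where a="m (i a) b"])
    have "\<psi> (act x (m (i a) b)) = \<psi> y"
      using eq[OF xU iabG] px py key by simp
    then show "m (i a) b \<in> G \<and> act x (m (i a) b) = y"
      using inj[OF actU[OF iabG] yU] iabG by blast
  next
    fix g assume g: "g \<in> G \<and> act x g = y"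
    then have "\<psi> (act x g) = \<psi> y" by simp
    moreover have "\<psi> (act x g) = (p x, m a g)" using eq[OF xU, of g] g px by simp
    ultimately have "m a g = b" using py by simp
    then have "m a g = m a (m (i a) b)" using key by simp
    then show "g = m (i a) b" using cancel_left[OF aG _ iabG] g by blast
  qed
qed

definition dv :: "'p \<Rightarrow> 'p \<Rightarrow> 'g" where "dv x y = (THE g. g \<in> G \<and> act x g = y)"

lemma dv_props:
  assumes "x \<in> topspace TP" "y \<in> topspace TP" "p x = p y"
  shows "dv x y \<in> G" "act x (dv x y) = y"
  using theI'[OF fiber_ex1[OF assms]] unfolding dv_def by auto

lemma dv_unique:
  assumes "x \<in> topspace TP" "y \<in> topspace TP" "p x = p y" "g \<in> G" "act x g = y"
  shows "dv x y = g"
  using fiber_ex1[OF assms(1-3)] dv_props[OF assms(1-3)] assms(4,5) by blast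


lemma triv_dv:
  assumes tr: "trivial_over TG m TP TY p act U"
  obtains \<psi> \<psi>' where "homeomorphic_maps (subtopology TP (PV U)) (prod_topology (subtopology TY U) TG) \<psi> \<psi>'"
    "\<And>x y. x \<in> PV U \<Longrightarrow> y \<in> PV U \<Longrightarrow> p x = p y \<Longrightarrow> dv x y = m (i (snd (\<psi> x))) (snd (\<psi> y))"
    "\<And>y g. y \<in> topspace TY \<Longrightarrow> y \<in> U \<Longrightarrow> g \<in> G \<Longrightarrow> \<psi>' (y, g) \<in> PV U"
    "\<And>y g. y \<in> topspace TY \<Longrightarrow> y \<in> U \<Longrightarrow> g \<in> G \<Longrightarrow> p (\<psi>' (y, g)) = y"
    "\<And>x. x \<in> PV U \<Longrightarrow> snd (\<psi> x) \<in> G"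
proof -
  obtain \<psi> \<psi>' where h: "homeomorphic_maps (subtopology TP (PV U)) (prod_topology (subtopology TY U) TG) \<psi> \<psi>'"
    and fs: "\<And>x. x \<in> PV U \<Longrightarrow> fst (\<psi> x) = p x"
    and eq: "\<And>x g. x \<in> PV U \<Longrightarrow> g \<in> G \<Longrightarrow> \<psi> (act x g) = (fst (\<psi> x), m (snd (\<psi> x)) g)"
    using triv_obtain[OF tr] by blast
  have fs': "\<forall>x\<in>PV U. fst (\<psi> x) = p x" using fs by blast
  note tf = triv_facts[OF h fs']
  have sndG: "\<And>x. x \<in> PV U \<Longrightarrow> snd (\<psi> x) \<in> G"
  proof -
    fix x assume "x \<in> PV U"
    then show "snd (\<psi> x) \<in> G" using tf(1) by (simp add: mem_Times_iff)
  qed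
  have "dv x y = m (i (snd (\<psi> x))) (snd (\<psi> y))" if xU: "x \<in> PV U" and yU: "y \<in> PV U" and pxy: "p x = p y" for x y
  proof -
    have x: "x \<in> topspace TP" and y: "y \<in> topspace TP" using xU yU unfolding PV_def by auto
    define a where "a = snd (\<psi> x)"
    define b where "b = snd (\<psi> y)"
    have aG: "a \<in> G" using sndG[OF xU] unfolding a_def .
    have bG: "b \<in> G" using sndG[OF yU] unfolding b_def .
    have px: "\<psi> x = (p x, a)" unfolding a_def using fs[OF xU] by (simp add: prod_eq_iff)
    have py: "\<psi> y = (p x, b)" unfolding b_def using fs[OF yU] pxy by (simp add: prod_eq_iff)
    have iaG: "i a \<in> G" using inv_in[OF aG] .
    have iabG: "m (i a) b \<in> G" using m_in[OF iaG bG] .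
    have key: "m a (m (i a) b) = b"
      using assoc[OF aG iaG bG] invr[OF aG] unitl[OF bG] by simp
    have actU: "act x (m (i a) b) \<in> PV U"
      using xU act_in[OF x iabG] p_act[OF x iabG] unfolding PV_def by simp
    have e1: "\<psi> (act x (m (i a) b)) = \<psi> y"
      using eq[OF xU iabG] px py key by simp
    have "act x (m (i a) b) = \<psi>' (\<psi> (act x (m (i a) b)))" using tf(2)[OF actU] by (rule sym)
    also have "\<dots> = \<psi>' (\<psi> y)" using e1 by (rule arg_cong)
    also have "\<dots> = y" using tf(2)[OF yU] .
    finally have "act x (m (i a) b) = y" .
    then show ?thesis unfolding a_def b_def using dv_unique[OF x y pxy iabG[unfolded a_def b_def]] by simp
  qed
  then show ?thesis using that[OF h _ tf(3) tf(5) sndG] by blast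
qed

lemma continuous_map_local:
  assumes "\<And>x. x \<in> topspace X \<Longrightarrow> \<exists>T. openin X T \<and> x \<in> T \<and> continuous_map (subtopology X T) Y f"
  shows "continuous_map X Y f"
proof -
  define T where "T x = (SOME T. openin X T \<and> x \<in> T \<and> continuous_map (subtopology X T) Y f)" for x
  have T: "openin X (T x) \<and> x \<in> T x \<and> continuous_map (subtopology X (T x)) Y f" if "x \<in> topspace X" for x
    unfolding T_def using someI_ex[OF assms[OF that]] .
  show ?thesis
    by (rule pasting_lemma[where I="topspace X" and T=T and f="\<lambda>_. f"]) (use T in auto)
qed

lemma dv_cont:
  assumes s1: "continuous_map W TP s1" and s2: "continuous_map W TP s2"
    and eqp: "\<And>z. z \<in> topspace W \<Longrightarrow> p (s1 z) = p (s2 z)"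
  shows "continuous_map W TG (\<lambda>z. dv (s1 z) (s2 z))"
proof (rule continuous_map_local)
  fix z0 assume z0: "z0 \<in> topspace W"
  have s1in: "\<And>z. z \<in> topspace W \<Longrightarrow> s1 z \<in> topspace TP"
    using continuous_map_image_subset_topspace[OF s1] by blast
  have s2in: "\<And>z. z \<in> topspace W \<Longrightarrow> s2 z \<in> topspace TP"
    using continuous_map_image_subset_topspace[OF s2] by blast
  obtain U where U: "openin TY U" "p (s1 z0) \<in> U" "trivial_over TG m TP TY p act U"
    using loctriv p_in s1in[OF z0] by blast
  obtain \<psi> \<psi>' where h: "homeomorphic_maps (subtopology TP (PV U)) (prod_topology (subtopology TY U) TG) \<psi> \<psi>'"
    and d: "\<And>x y. x \<in> PV U \<Longrightarrow> y \<in> PV U \<Longrightarrow> p x = p y \<Longrightarrow> dv x y = m (i (snd (\<psi> x))) (snd (\<psi> y))"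
    using triv_dv[OF U(3)] by metis
  have psic: "continuous_map (subtopology TP (PV U)) (prod_topology (subtopology TY U) TG) \<psi>"
    using h unfolding homeomorphic_maps_def by blast
  define T where "T = {z \<in> topspace W. (p \<circ> s1) z \<in> U}"
  have Topen: "openin W T" unfolding T_def
    by (rule openin_continuous_map_preimage[OF continuous_map_compose[OF s1 cont_p] U(1)])
  have z0T: "z0 \<in> T" unfolding T_def using z0 U(2) by simp
  have TW: "T \<subseteq> topspace W" unfolding T_def by blast
  have s1T: "continuous_map (subtopology W T) (subtopology TP (PV U)) s1"
    unfolding continuous_map_in_subtopology
  proof
    show "continuous_map (subtopology W T) TP s1" using continuous_map_from_subtopology[OF s1] .
    show "s1 \<in> topspace (subtopology W T) \<rightarrow> PV U" unfolding PV_def T_def using s1in by auto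
  qed
  have s2T: "continuous_map (subtopology W T) (subtopology TP (PV U)) s2"
    unfolding continuous_map_in_subtopology
  proof
    show "continuous_map (subtopology W T) TP s2" using continuous_map_from_subtopology[OF s2] .
    show "s2 \<in> topspace (subtopology W T) \<rightarrow> PV U" unfolding PV_def T_def using s2in eqp by auto
  qed
  have c1: "continuous_map (subtopology W T) TG (\<lambda>z. snd (\<psi> (s1 z)))"
    using continuous_map_compose[OF continuous_map_compose[OF s1T psic] continuous_map_snd] by (simp add: o_def)
  have c2: "continuous_map (subtopology W T) TG (\<lambda>z. snd (\<psi> (s2 z)))"
    using continuous_map_compose[OF continuous_map_compose[OF s2T psic] continuous_map_snd] by (simp add: o_def)
  have c: "continuous_map (subtopology W T) TG (\<lambda>z. m (i (snd (\<psi> (s1 z)))) (snd (\<psi> (s2 z))))"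
    by (rule cm_m[OF cm_i[OF c1] c2])
  have "continuous_map (subtopology W T) TG (\<lambda>z. dv (s1 z) (s2 z))"
  proof (rule continuous_map_eq[OF c])
    fix z assume "z \<in> topspace (subtopology W T)"
    then have z: "z \<in> topspace W" "z \<in> T" by auto
    have "s1 z \<in> PV U" "s2 z \<in> PV U" unfolding PV_def using z s1in s2in eqp unfolding T_def by auto
    then show "m (i (snd (\<psi> (s1 z)))) (snd (\<psi> (s2 z))) = dv (s1 z) (s2 z)"
      using d eqp[OF z(1)] by simp
  qed
  then show "\<exists>T. openin W T \<and> z0 \<in> T \<and> continuous_map (subtopology W T) TG (\<lambda>z. dv (s1 z) (s2 z))"
    using Topen z0T by blast
qed

lemma section_trivial:
  assumes sc: "continuous_map TY TP s" and ps: "\<And>y. y \<in> topspace TY \<Longrightarrow> p (s y) = y"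
  shows "trivial_over TG m TP TY p act (topspace TY)"
proof -
  have sin: "\<And>y. y \<in> topspace TY \<Longrightarrow> s y \<in> topspace TP"
    using continuous_map_image_subset_topspace[OF sc] by blast
  define \<phi> where "\<phi> x = (p x, dv (s (p x)) x)" for x
  define \<phi>' where "\<phi>' yg = act (s (fst yg)) (snd yg)" for yg
  have sp: "continuous_map TP TP (\<lambda>x. s (p x))"
    using continuous_map_compose[OF cont_p sc] by (simp add: o_def)
  have spp: "\<And>x. x \<in> topspace TP \<Longrightarrow> p (s (p x)) = p x" using ps p_in by blast
  have spin: "\<And>x. x \<in> topspace TP \<Longrightarrow> s (p x) \<in> topspace TP" using sin p_in by blast
  have eqset: "{x \<in> topspace TP. p x \<in> topspace TY} = topspace TP" using p_in by blast
  have c1: "continuous_map TP (prod_topology TY TG) \<phi>"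
    unfolding \<phi>_def
  proof (rule continuous_map_pairedI[OF cont_p])
    show "continuous_map TP TG (\<lambda>x. dv (s (p x)) x)"
    proof -
      have idc: "continuous_map TP TP (\<lambda>x. x)" using continuous_map_id unfolding id_def .
      show ?thesis by (rule dv_cont[OF sp idc]) (use spp in auto)
    qed
  qed
  have c2: "continuous_map (prod_topology TY TG) TP \<phi>'"
    unfolding \<phi>'_def
    by (rule cm_act[OF continuous_map_compose[OF continuous_map_fst sc, unfolded o_def] continuous_map_snd])
  have hm: "homeomorphic_maps TP (prod_topology TY TG) \<phi> \<phi>'"
    unfolding homeomorphic_maps_def
  proof (intro conjI ballI c1 c2)
    fix x assume x: "x \<in> topspace TP"
    show "\<phi>' (\<phi> x) = x" unfolding \<phi>_def \<phi>'_def
      using dv_props(2)[OF spin[OF x] x spp[OF x]] by simp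
  next
    fix yg assume yg: "yg \<in> topspace (prod_topology TY TG)"
    obtain y g where yg': "yg = (y, g)" "y \<in> topspace TY" "g \<in> G" using yg by auto
    have a: "act (s y) g \<in> topspace TP" using act_in[OF sin[OF yg'(2)] yg'(3)] .
    have pa: "p (act (s y) g) = y" using p_act[OF sin[OF yg'(2)] yg'(3)] ps[OF yg'(2)] by simp
    have "dv (s y) (act (s y) g) = g"
      by (rule dv_unique[OF sin[OF yg'(2)] a]) (use pa ps[OF yg'(2)] yg'(3) in auto)
    then show "\<phi> (\<phi>' yg) = yg" unfolding \<phi>_def \<phi>'_def using yg'(1) pa by simp
  qed
  show ?thesis
    unfolding trivial_over_def
  proof (intro exI conjI ballI impI)
    show "homeomorphic_map (subtopology TP {x \<in> topspace TP. p x \<in> topspace TY})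
       (prod_topology (subtopology TY (topspace TY)) TG) \<phi>"
      unfolding eqset subtopology_topspace homeomorphic_map_maps using hm by blast
  next
    fix x assume "x \<in> topspace TP" "p x \<in> topspace TY"
    then show "fst (\<phi> x) = p x" unfolding \<phi>_def by simp
  next
    fix x g assume x: "x \<in> topspace TP" and "p x \<in> topspace TY" and g: "g \<in> G"
    have kG: "dv (s (p x)) x \<in> G" using dv_props(1)[OF spin[OF x] x spp[OF x]] .
    have ax: "act (s (p x)) (dv (s (p x)) x) = x" using dv_props(2)[OF spin[OF x] x spp[OF x]] .
    have "act (s (p x)) (m (dv (s (p x)) x) g) = act x g"
      using act_act[OF spin[OF x] kG g] ax by simp
    then have "dv (s (p x)) (act x g) = m (dv (s (p x)) x) g"
      using dv_unique[OF spin[OF x] act_in[OF x g] _ m_in[OF kG g]] spp[OF x] p_act[OF x g] by simp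
    then show "\<phi> (act x g) = (fst (\<phi> x), m (snd (\<phi> x)) g)"
      unfolding \<phi>_def using p_act[OF x g] by simp
  qed
qed


lemma local_lift:
  assumes tr: "trivial_over TG m TP TY p act U" and gc: "continuous_map Z TY g"
    and gU: "\<And>z. z \<in> topspace Z \<Longrightarrow> g z \<in> U"
  obtains s where "continuous_map Z TP s" "\<And>z. z \<in> topspace Z \<Longrightarrow> p (s z) = g z"
proof -
  obtain \<psi> \<psi>' where h: "homeomorphic_maps (subtopology TP (PV U)) (prod_topology (subtopology TY U) TG) \<psi> \<psi>'"
    and pp: "\<And>y g. y \<in> topspace TY \<Longrightarrow> y \<in> U \<Longrightarrow> g \<in> G \<Longrightarrow> p (\<psi>' (y, g)) = y"
    using triv_dv[OF tr] by metis
  have c': "continuous_map (prod_topology (subtopology TY U) TG) (subtopology TP (PV U)) \<psi>'"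
    using h unfolding homeomorphic_maps_def by blast
  have gin: "\<And>z. z \<in> topspace Z \<Longrightarrow> g z \<in> topspace TY"
    using continuous_map_image_subset_topspace[OF gc] by blast
  have gU': "continuous_map Z (subtopology TY U) g"
    unfolding continuous_map_in_subtopology using gc gU by blast
  have pc: "continuous_map Z (prod_topology (subtopology TY U) TG) (\<lambda>z. (g z, e))"
    by (rule continuous_map_pairedI[OF gU']) (simp add: e_in)
  have "continuous_map Z (subtopology TP (PV U)) (\<lambda>z. \<psi>' (g z, e))"
    using continuous_map_compose[OF pc c'] by (simp add: o_def)
  then have "continuous_map Z TP (\<lambda>z. \<psi>' (g z, e))"
    by (simp add: continuous_map_in_subtopology)
  moreover have "\<And>z. z \<in> topspace Z \<Longrightarrow> p (\<psi>' (g z, e)) = g z"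
    using pp gin gU e_in by blast
  ultimately show ?thesis using that by blast
qed

lemma glue:
  assumes cA: "closedin Z A" and cB: "closedin Z B" and AB: "topspace Z \<subseteq> A \<union> B"
    and gc: "continuous_map Z TY g"
    and sA: "continuous_map (subtopology Z A) TP sA" and pA: "\<And>z. z \<in> topspace Z \<Longrightarrow> z \<in> A \<Longrightarrow> p (sA z) = g z"
    and sB: "continuous_map (subtopology Z B) TP sB" and pB: "\<And>z. z \<in> topspace Z \<Longrightarrow> z \<in> B \<Longrightarrow> p (sB z) = g z"
    and rc: "continuous_map (subtopology Z B) (subtopology Z (A \<inter> B)) r"
    and rid: "\<And>z. z \<in> topspace Z \<Longrightarrow> z \<in> A \<Longrightarrow> z \<in> B \<Longrightarrow> r z = z"
  obtains s where "continuous_map Z TP s" "\<And>z. z \<in> topspace Z \<Longrightarrow> p (s z) = g z"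
proof -
  have rimg: "r \<in> topspace (subtopology Z B) \<rightarrow> topspace (subtopology Z (A \<inter> B))"
    using continuous_map_image_subset_topspace[OF rc] by blast
  have rin: "r z \<in> topspace Z \<and> r z \<in> A \<and> r z \<in> B" if "z \<in> topspace Z" "z \<in> B" for z
    using rimg that by auto
  have sAin: "sA z \<in> topspace TP" if "z \<in> topspace Z" "z \<in> A" for z
    using continuous_map_image_subset_topspace[OF sA] that by auto
  have sBin: "sB z \<in> topspace TP" if "z \<in> topspace Z" "z \<in> B" for z
    using continuous_map_image_subset_topspace[OF sB] that by auto
  have rZ: "continuous_map (subtopology Z B) Z r" using rc by (simp add: continuous_map_in_subtopology)
  have rA: "continuous_map (subtopology Z B) (subtopology Z A) r"
    unfolding continuous_map_in_subtopology using rZ rin by auto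
  have rB: "continuous_map (subtopology Z B) (subtopology Z B) r"
    unfolding continuous_map_in_subtopology using rZ rin by auto
  define k where "k z = dv (sB (r z)) (sA (r z))" for z
  have kc: "continuous_map (subtopology Z B) TG k"
    unfolding k_def
  proof (rule dv_cont)
    show "continuous_map (subtopology Z B) TP (\<lambda>z. sB (r z))"
      using continuous_map_compose[OF rB sB] by (simp add: o_def)
    show "continuous_map (subtopology Z B) TP (\<lambda>z. sA (r z))"
      using continuous_map_compose[OF rA sA] by (simp add: o_def)
    fix z assume "z \<in> topspace (subtopology Z B)"
    then have z: "z \<in> topspace Z" "z \<in> B" by auto
    show "p (sB (r z)) = p (sA (r z))" using pA pB rin[OF z] by simp
  qed
  define f2 where "f2 z = act (sB z) (k z)" for z
  have f2c: "continuous_map (subtopology Z B) TP f2"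
    unfolding f2_def by (rule cm_act[OF sB kc])
  have kG: "k z \<in> G" if "z \<in> topspace Z" "z \<in> B" for z
    using continuous_map_image_subset_topspace[OF kc] that by auto
  have agree: "sA z = f2 z" if "z \<in> topspace Z" "z \<in> A" "z \<in> B" for z
  proof -
    have "r z = z" using rid that by blast
    then show ?thesis unfolding f2_def k_def
      using dv_props(2)[OF sBin[OF that(1,3)] sAin[OF that(1,2)]] pA pB that by simp
  qed
  define s where "s z = (if z \<in> A then sA z else f2 z)" for z
  have "continuous_map Z TP s"
  proof (rule pasting_lemma_closed[where I="{True,False}" and T="\<lambda>b. if b then A else B"
        and f="\<lambda>b. if b then sA else f2"])
    show "finite {True, False}" by simp
    show "\<And>i. i \<in> {True, False} \<Longrightarrow> closedin Z (if i then A else B)" using cA cB by auto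
    show "\<And>i. i \<in> {True, False} \<Longrightarrow> continuous_map (subtopology Z (if i then A else B)) TP (if i then sA else f2)"
      using sA f2c by auto
    show "\<And>i j x. i \<in> {True, False} \<Longrightarrow> j \<in> {True, False} \<Longrightarrow> x \<in> topspace Z \<inter> (if i then A else B) \<inter> (if j then A else B)
       \<Longrightarrow> (if i then sA else f2) x = (if j then sA else f2) x"
      using agree by (auto split: if_splits)
    show "\<And>x. x \<in> topspace Z \<Longrightarrow> \<exists>j. j \<in> {True, False} \<and> x \<in> (if j then A else B) \<and> s x = (if j then sA else f2) x"
      using AB unfolding s_def by auto
  qed
  moreover have "p (s z) = g z" if "z \<in> topspace Z" for z
  proof (cases "z \<in> A")
    case True then show ?thesis unfolding s_def using pA that by simp
  next
    case False
    then have zB: "z \<in> B" using AB that by auto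
    show ?thesis unfolding s_def f2_def using False p_act[OF sBin[OF that zB] kG[OF that zB]] pB[OF that zB] by simp
  qed
  ultimately show ?thesis using that by blast
qed

lemma glue_eu:
  fixes A B :: "'a::topological_space set"
  assumes cA: "closed A" and cB: "closed B" and gc: "continuous_map (top_of_set (A \<union> B)) TY g"
    and sA: "continuous_map (top_of_set A) TP sA" and pA: "\<And>z. z \<in> A \<Longrightarrow> p (sA z) = g z"
    and sB: "continuous_map (top_of_set B) TP sB" and pB: "\<And>z. z \<in> B \<Longrightarrow> p (sB z) = g z"
    and rc: "continuous_on B r" and rim: "r ` B \<subseteq> A \<inter> B" and rid: "\<And>z. z \<in> A \<Longrightarrow> z \<in> B \<Longrightarrow> r z = z"
  obtains s where "continuous_map (top_of_set (A \<union> B)) TP s" "\<And>z. z \<in> A \<union> B \<Longrightarrow> p (s z) = g z"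
proof -
  have eA: "subtopology (top_of_set (A \<union> B)) A = top_of_set A"
    by (simp add: subtopology_subtopology Int_absorb1)
  have eB: "subtopology (top_of_set (A \<union> B)) B = top_of_set B"
    by (simp add: subtopology_subtopology Int_absorb1)
  have eAB: "subtopology (top_of_set (A \<union> B)) (A \<inter> B) = top_of_set (A \<inter> B)"
  proof -
    have "(A \<union> B) \<inter> (A \<inter> B) = A \<inter> B" by blast
    then show ?thesis by (simp add: subtopology_subtopology)
  qed
  have c1: "closedin (top_of_set (A \<union> B)) A"
    using closedin_closed_Int[OF cA, of "A \<union> B"] by (simp add: Int_absorb1)
  have c2: "closedin (top_of_set (A \<union> B)) B"
    using closedin_closed_Int[OF cB, of "A \<union> B"] by (simp add: Int_absorb1)
  have r': "continuous_map (subtopology (top_of_set (A \<union> B)) B) (subtopology (top_of_set (A \<union> B)) (A \<inter> B)) r"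
    unfolding eB eAB using rc rim by auto
  obtain s where "continuous_map (top_of_set (A \<union> B)) TP s" "\<And>z. z \<in> topspace (top_of_set (A \<union> B)) \<Longrightarrow> p (s z) = g z"
    by (rule glue[OF c1 c2 _ gc sA[folded eA] _ sB[folded eB] _ r']) (use pA pB rid in auto)
  then show ?thesis using that by auto
qed


lemma square_lift:
  assumes gc: "continuous_map (top_of_set ({0..1} \<times> {0..1})) TY g"
  obtains s where "continuous_map (top_of_set ({0..1::real} \<times> {0..1::real})) TP s"
    "\<And>z. z \<in> {0..1} \<times> {0..1} \<Longrightarrow> p (s z) = g z"
proof -
  define S where "S = ({0..1} \<times> {0..1} :: (real \<times> real) set)"
  have gS: "continuous_map (top_of_set S) TY g" using gc unfolding S_def .
  have gsub: "continuous_map (top_of_set T) TY g" if "T \<subseteq> S" for T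
    using continuous_map_from_subtopology_mono[OF gS that] .
  have gin: "g z \<in> topspace TY" if "z \<in> S" for z
    using continuous_map_image_subset_topspace[OF gS] that by auto
  define C where "C = {Ow. open Ow \<and> (\<exists>U. trivial_over TG m TP TY p act U \<and> (\<forall>z\<in>S\<inter>Ow. g z \<in> U))}"
  have cover: "S \<subseteq> \<Union>C"
  proof
    fix z assume z: "z \<in> S"
    obtain U where U: "openin TY U" "g z \<in> U" "trivial_over TG m TP TY p act U"
      using loctriv[OF gin[OF z]] by blast
    have "openin (top_of_set S) {w \<in> topspace (top_of_set S). g w \<in> U}"
      by (rule openin_continuous_map_preimage[OF gS U(1)])
    then obtain Ow where Ow: "open Ow" "{w \<in> S. g w \<in> U} = S \<inter> Ow" by (auto simp: openin_open)
    have "z \<in> Ow" using Ow(2) z U(2) by blast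
    moreover have "Ow \<in> C" unfolding C_def using Ow U(3) by blast
    ultimately show "z \<in> \<Union>C" by blast
  qed
  have Cne: "C \<noteq> {}" using cover unfolding S_def by auto
  have opeC: "\<And>B. B \<in> C \<Longrightarrow> open B" unfolding C_def by blast
  have cpt: "compact S" unfolding S_def by (intro compact_Times compact_Icc)
  obtain \<delta> where \<delta>: "0 < \<delta>" "\<And>T. T \<subseteq> S \<Longrightarrow> diameter T < \<delta> \<Longrightarrow> \<exists>B\<in>C. T \<subseteq> B"
    using Lebesgue_number_lemma[OF cpt Cne cover opeC] by blast
  obtain K :: nat where K: "2 / \<delta> < real K" using reals_Archimedean2 by blast
  have Kpos: "0 < real K" using K \<delta>(1) by (smt (verit) divide_pos_pos)
  define h where "h = 1 / real K"
  have hpos: "0 < h" unfolding h_def using Kpos by simp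
  have nn: "\<And>a::nat. 0 \<le> real a * h" using hpos by simp
  have nn': "\<And>(a::nat) x. real a * h \<le> x \<Longrightarrow> 0 \<le> x" using nn order_trans by blast
  have Kh: "real K * h = 1" unfolding h_def using Kpos by simp
  have h2: "2 * h < \<delta>" unfolding h_def using K Kpos \<delta>(1) by (simp add: field_simps)
  have grid_le: "real a * h + h \<le> 1" if "a < K" for a
  proof -
    have "real a + 1 \<le> real K" using that by linarith
    then have "(real a + 1) * h \<le> real K * h" using hpos by (rule mult_right_mono[OF _ less_imp_le])
    then show ?thesis using Kh by (simp add: algebra_simps)
  qed
  define Sq where "Sq a j = {real a * h .. real a * h + h} \<times> {real j * h .. real j * h + h}" for a j :: nat
  have SqS: "Sq a j \<subseteq> S" if "a < K" "j < K" for a j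
    unfolding Sq_def S_def using grid_le[OF that(1)] grid_le[OF that(2)] hpos nn[of a] nn[of j]
    by (auto simp: mult_nonneg_nonneg dest: nn')
  have cube: "\<exists>U. trivial_over TG m TP TY p act U \<and> (\<forall>z\<in>Sq a j. g z \<in> U)" if aj: "a < K" "j < K" for a j
  proof -
    have "diameter (Sq a j) \<le> 2 * h" unfolding Sq_def by (rule sq_diam) (use hpos in simp)
    then have "diameter (Sq a j) < \<delta>" using h2 by simp
    then obtain B where B: "B \<in> C" "Sq a j \<subseteq> B" using \<delta>(2)[OF SqS[OF aj]] by blast
    then obtain U where U: "trivial_over TG m TP TY p act U" "\<forall>z\<in>S\<inter>B. g z \<in> U" unfolding C_def by blast
    show ?thesis using U B(2) SqS[OF aj] by blast
  qed
  have sqlift: "\<exists>s. continuous_map (top_of_set T) TP s \<and> (\<forall>z\<in>T. p (s z) = g z)"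
    if ajT: "a < K" "j < K" "T \<subseteq> Sq a j" for a j T
  proof -
    obtain U where U: "trivial_over TG m TP TY p act U" "\<forall>z\<in>Sq a j. g z \<in> U" using cube[OF ajT(1,2)] by blast
    have TS: "T \<subseteq> S" using ajT SqS by blast
    obtain s where "continuous_map (top_of_set T) TP s" "\<And>z. z \<in> topspace (top_of_set T) \<Longrightarrow> p (s z) = g z"
      by (rule local_lift[OF U(1) gsub[OF TS]]) (use U(2) ajT(3) in auto)
    then show ?thesis by auto
  qed
  have row: "\<exists>s. continuous_map (top_of_set ({0..real b * h} \<times> {real j * h .. real j * h + h})) TP s
      \<and> (\<forall>z\<in>{0..real b * h} \<times> {real j * h .. real j * h + h}. p (s z) = g z)"
    if jb: "j < K" "b \<le> K" for j b
    using jb(2)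
  proof (induction b)
    case 0
    have "{0..real 0 * h} \<times> {real j * h .. real j * h + h} \<subseteq> Sq 0 j" unfolding Sq_def by auto
    then show ?case using sqlift[OF Kpos[unfolded of_nat_0_less_iff] jb(1)] by blast
  next
    case (Suc b)
    then have bK: "b < K" by simp
    obtain sA where sA: "continuous_map (top_of_set ({0..real b * h} \<times> {real j * h .. real j * h + h})) TP sA"
      "\<forall>z\<in>{0..real b * h} \<times> {real j * h .. real j * h + h}. p (sA z) = g z"
      using Suc by auto
    obtain sB where sB: "continuous_map (top_of_set (Sq b j)) TP sB" "\<forall>z\<in>Sq b j. p (sB z) = g z"
      using sqlift[OF bK jb(1) order_refl] by blast
    have un: "({0..real b * h} \<times> {real j * h .. real j * h + h}) \<union> Sq b j
        = {0..real (Suc b) * h} \<times> {real j * h .. real j * h + h}"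
    proof -
      have "{0..real b * h} \<union> {real b * h..real b * h + h} = {0..real b * h + h}"
        by (rule ivl_un) (use hpos in auto)
      then show ?thesis unfolding Sq_def by (simp add: Times_Un_distrib1[symmetric] algebra_simps)
    qed
    have sub: "{0..real (Suc b) * h} \<times> {real j * h .. real j * h + h} \<subseteq> S"
    proof -
      have "real (Suc b) * h \<le> 1" using grid_le[OF bK] by (simp add: algebra_simps)
      moreover have "real j * h + h \<le> 1" using grid_le[OF jb(1)] .
      ultimately show ?thesis unfolding S_def using hpos nn[of j] by (auto simp: mult_nonneg_nonneg dest: nn')
    qed
    obtain s where "continuous_map (top_of_set (({0..real b * h} \<times> {real j * h .. real j * h + h}) \<union> Sq b j)) TP s"
      "\<And>z. z \<in> ({0..real b * h} \<times> {real j * h .. real j * h + h}) \<union> Sq b j \<Longrightarrow> p (s z) = g z"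
    proof (rule glue_eu[where r="\<lambda>(t, u). (real b * h, u)"])
      show "closed ({0..real b * h} \<times> {real j * h..real j * h + h})" by (intro closed_Times closed_atLeastAtMost)
      show "closed (Sq b j)" unfolding Sq_def by (intro closed_Times closed_atLeastAtMost)
      show "continuous_map (top_of_set ({0..real b * h} \<times> {real j * h..real j * h + h} \<union> Sq b j)) TY g"
        unfolding un by (rule gsub[OF sub])
      show "continuous_map (top_of_set ({0..real b * h} \<times> {real j * h..real j * h + h})) TP sA" by (rule sA(1))
      show "continuous_map (top_of_set (Sq b j)) TP sB" by (rule sB(1))
      show "\<And>z. z \<in> {0..real b * h} \<times> {real j * h..real j * h + h} \<Longrightarrow> p (sA z) = g z" using sA(2) by blast
      show "\<And>z. z \<in> Sq b j \<Longrightarrow> p (sB z) = g z" using sB(2) by blast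
      show "continuous_on (Sq b j) (\<lambda>(t, u). (real b * h, u))"
        by (simp add: case_prod_unfold continuous_intros)
      show "(\<lambda>(t, u). (real b * h, u)) ` Sq b j \<subseteq> {0..real b * h} \<times> {real j * h..real j * h + h} \<inter> Sq b j"
        unfolding Sq_def using hpos nn[of b] nn[of j] by (auto simp: mult_nonneg_nonneg dest: nn')
      show "\<And>z. z \<in> {0..real b * h} \<times> {real j * h..real j * h + h} \<Longrightarrow> z \<in> Sq b j \<Longrightarrow> (case z of (t, u) \<Rightarrow> (real b * h, u)) = z"
        unfolding Sq_def by auto
    qed blast
    then show ?case unfolding un by blast
  qed
  have col: "\<exists>s. continuous_map (top_of_set ({0..1::real} \<times> {0..real c * h})) TP s
      \<and> (\<forall>z\<in>{0..1::real} \<times> {0..real c * h}. p (s z) = g z)"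
    if cK0: "c \<le> K" for c
    using cK0
  proof (induction c)
    case 0
    obtain s where s: "continuous_map (top_of_set ({0..real K * h} \<times> {real 0 * h .. real 0 * h + h})) TP s"
      "\<forall>z\<in>{0..real K * h} \<times> {real 0 * h .. real 0 * h + h}. p (s z) = g z"
      using row[OF Kpos[unfolded of_nat_0_less_iff] order_refl] by blast
    have sub: "{0..1::real} \<times> {0..real 0 * h} \<subseteq> {0..real K * h} \<times> {real 0 * h .. real 0 * h + h}"
      using Kh hpos by auto
    show ?case
      using continuous_map_from_subtopology_mono[OF s(1) sub] s(2) sub by blast
  next
    case (Suc c)
    then have cK: "c < K" by simp
    obtain sA where sA: "continuous_map (top_of_set ({0..1::real} \<times> {0..real c * h})) TP sA"
      "\<forall>z\<in>{0..1::real} \<times> {0..real c * h}. p (sA z) = g z"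
      using Suc by auto
    obtain sB where sB: "continuous_map (top_of_set ({0..real K * h} \<times> {real c * h .. real c * h + h})) TP sB"
      "\<forall>z\<in>{0..real K * h} \<times> {real c * h .. real c * h + h}. p (sB z) = g z"
      using row[OF cK order_refl] by blast
    define B where "B = {0..1::real} \<times> {real c * h .. real c * h + h}"
    have Beq: "{0..real K * h} \<times> {real c * h .. real c * h + h} = B" unfolding B_def Kh ..
    have un: "({0..1::real} \<times> {0..real c * h}) \<union> B = {0..1::real} \<times> {0..real (Suc c) * h}"
    proof -
      have "{0..real c * h} \<union> {real c * h..real c * h + h} = {0..real c * h + h}"
        by (rule ivl_un) (use hpos in auto)
      moreover have "{0..1::real} \<times> {0..real c * h} \<union> {0..1} \<times> {real c * h..real c * h + h}
          = {0..1} \<times> ({0..real c * h} \<union> {real c * h..real c * h + h})" by blast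
      moreover have "real (Suc c) * h = real c * h + h" by (simp add: algebra_simps)
      ultimately show ?thesis unfolding B_def by simp
    qed
    have sub: "{0..1::real} \<times> {0..real (Suc c) * h} \<subseteq> S"
    proof -
      have "real (Suc c) * h \<le> 1" using grid_le[OF cK] by (simp add: algebra_simps)
      then show ?thesis unfolding S_def by auto
    qed
    obtain s where "continuous_map (top_of_set (({0..1::real} \<times> {0..real c * h}) \<union> B)) TP s"
      "\<And>z. z \<in> ({0..1::real} \<times> {0..real c * h}) \<union> B \<Longrightarrow> p (s z) = g z"
    proof (rule glue_eu[where r="\<lambda>(t, u). (t, real c * h)"])
      show "closed ({0..1::real} \<times> {0..real c * h})" by (intro closed_Times closed_atLeastAtMost)
      show "closed B" unfolding B_def by (intro closed_Times closed_atLeastAtMost)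
      show "continuous_map (top_of_set ({0..1::real} \<times> {0..real c * h} \<union> B)) TY g"
        unfolding un by (rule gsub[OF sub])
      show "continuous_map (top_of_set ({0..1::real} \<times> {0..real c * h})) TP sA" by (rule sA(1))
      show "continuous_map (top_of_set B) TP sB" using sB(1) unfolding Beq .
      show "\<And>z. z \<in> {0..1::real} \<times> {0..real c * h} \<Longrightarrow> p (sA z) = g z" using sA(2) by blast
      show "\<And>z. z \<in> B \<Longrightarrow> p (sB z) = g z" using sB(2) unfolding Beq by blast
      show "continuous_on B (\<lambda>(t, u). (t, real c * h))"
        by (simp add: case_prod_unfold continuous_intros)
      show "(\<lambda>(t, u). (t, real c * h)) ` B \<subseteq> {0..1::real} \<times> {0..real c * h} \<inter> B"
        unfolding B_def using hpos nn[of c] by (auto simp: mult_nonneg_nonneg dest: nn')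
      show "\<And>z. z \<in> {0..1::real} \<times> {0..real c * h} \<Longrightarrow> z \<in> B \<Longrightarrow> (case z of (t, u) \<Rightarrow> (t, real c * h)) = z"
        unfolding B_def by auto
    qed blast
    then show ?case unfolding un by blast
  qed
  obtain s where "continuous_map (top_of_set ({0..1::real} \<times> {0..real K * h})) TP s"
      "\<forall>z\<in>{0..1::real} \<times> {0..real K * h}. p (s z) = g z"
    using col[OF order_refl] by blast
  then show ?thesis using that unfolding Kh by blast
qed


end

locale pbX = pbundle TG m i e TP X_crs p act
  for TG :: "'g topology" and m i e and TP :: "'p topology" and p act
begin

lemma numerable_trivial:
  assumes num: "numerable_bundle TG m TP X_crs p act"
  shows "trivial_bundle TG m TP X_crs p act"
proof -
  have tsY: "topspace X_crs = X_set" using topspace_crs by simp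
  obtain \<V> F where V: "\<forall>V\<in>\<V>. openin X_crs V \<and> trivial_over TG m TP X_crs p act V"
    and pu: "loc_finite_partition_of_unity_refining X_crs F \<V>"
    using num unfolding numerable_bundle_def by blast
  have oX: "X_origin \<in> topspace X_crs" unfolding tsY X_set_def by simp
  have sum1: "(\<Sum>f\<in>{f\<in>F. f X_origin \<noteq> 0}. f X_origin) = 1"
    using pu oX unfolding loc_finite_partition_of_unity_refining_def by blast
  have "{f\<in>F. f X_origin \<noteq> 0} \<noteq> {}"
  proof
    assume "{f\<in>F. f X_origin \<noteq> 0} = {}"
    then have "(\<Sum>f\<in>{f\<in>F. f X_origin \<noteq> 0}. f X_origin) = 0" by (simp only: sum.empty)
    then show False using sum1 by simp
  qed
  then obtain f where fF: "f \<in> F" and fne: "f X_origin \<noteq> 0" by blast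
  have fc: "continuous_map X_crs euclideanreal f" and fnn: "\<And>y. y \<in> topspace X_crs \<Longrightarrow> 0 \<le> f y"
    using pu fF unfolding loc_finite_partition_of_unity_refining_def by blast+
  have fpos: "0 < f X_origin" using fnn[OF oX] fne by simp
  obtain V where VV: "V \<in> \<V>" and suppV: "{y\<in>topspace X_crs. 0 < f y} \<subseteq> V"
    using pu fF unfolding loc_finite_partition_of_unity_refining_def by blast
  have Vtr: "trivial_over TG m TP X_crs p act V" using V VV by blast
  obtain N0 where N0: "finite N0" and N0p: "\<And>n w. 1 \<le> n \<Longrightarrow> n \<notin> N0 \<Longrightarrow> w \<in> Dn n \<Longrightarrow> f X_origin / 2 \<le> f w"
    using support_cells[OF fc fpos] by blast
  have DnV: "Dn n \<subseteq> V" if "1 \<le> n" "n \<notin> N0" for n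
  proof
    fix w assume w: "w \<in> Dn n"
    have "0 < f w" using N0p[OF that w] fpos by simp
    moreover have "w \<in> topspace X_crs" using Dn_sub[OF that(1)] w tsY by blast
    ultimately show "w \<in> V" using suppV by blast
  qed
  have oV: "X_origin \<in> V" using suppV oX fpos by blast
  define N where "N = {n \<in> N0. 1 \<le> n}"
  have finN: "finite N" unfolding N_def using N0 by simp
  have N1: "\<forall>n\<in>N. 1 \<le> n" unfolding N_def by simp
  obtain sV where sVc: "continuous_map (subtopology X_crs V) TP sV"
    and sVp: "\<And>z. z \<in> topspace (subtopology X_crs V) \<Longrightarrow> p (sV z) = z"
  proof (rule local_lift[OF Vtr, of "subtopology X_crs V" "\<lambda>y. y"])
    show "continuous_map (subtopology X_crs V) X_crs (\<lambda>y. y)"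
      using continuous_map_from_subtopology[OF continuous_map_id[of X_crs]] unfolding id_def .
  qed auto
  have sVin: "sV X_origin \<in> topspace TP"
    using continuous_map_image_subset_topspace[OF sVc] oX oV by auto
  have psVo: "p (sV X_origin) = X_origin" using sVp oX oV by simp
  obtain hm hm' where hom: "homeomorphism ({0..1::real} \<times> {0..1::real}) (cball (0::complex) 1) hm hm'"
    using square_disk by blast
  have hmc: "continuous_map (top_of_set ({0..1::real} \<times> {0..1::real})) (top_of_set (cball (0::complex) 1)) hm"
  proof -
    have "continuous_on ({0..1::real} \<times> {0..1::real}) hm" "hm ` ({0..1::real} \<times> {0..1::real}) = cball 0 1"
      using hom unfolding homeomorphism_def by auto
    then show ?thesis by (simp add: image_subset_iff_funcset[symmetric])
  qed
  have hm'c: "continuous_map (top_of_set (cball (0::complex) 1)) (top_of_set ({0..1::real} \<times> {0..1::real})) hm'"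
  proof -
    have "continuous_on (cball 0 1) hm'" "hm' ` cball 0 1 = {0..1::real} \<times> {0..1::real}"
      using hom unfolding homeomorphism_def by auto
    then show ?thesis by (simp add: image_subset_iff_funcset[symmetric])
  qed
  have hmhm': "\<And>z. z \<in> cball (0::complex) 1 \<Longrightarrow> hm (hm' z) = z"
    using hom unfolding homeomorphism_def by auto
  have disk: "\<exists>\<sigma>. continuous_map (subtopology X_crs (Dn n)) TP \<sigma> \<and> (\<forall>w\<in>Dn n. p (\<sigma> w) = w)
      \<and> \<sigma> X_origin = sV X_origin" if n: "1 \<le> n" for n
  proof -
    have gc: "continuous_map (top_of_set ({0..1} \<times> {0..1})) X_crs (X_cell n \<circ> hm)"
      by (rule continuous_map_compose[OF hmc cont_cell[OF n]])
    obtain s where sc: "continuous_map (top_of_set ({0..1::real} \<times> {0..1::real})) TP s"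
      and sp: "\<And>z. z \<in> {0..1} \<times> {0..1} \<Longrightarrow> p (s z) = (X_cell n \<circ> hm) z"
      using square_lift[OF gc] by blast
    define \<sigma>0 where "\<sigma>0 w = s (hm' (Xinv w))" for w
    have c0: "continuous_map (subtopology X_crs (Dn n)) TP \<sigma>0"
    proof -
      have "continuous_map (subtopology X_crs (Dn n)) TP (s \<circ> (hm' \<circ> Xinv))"
        
        by (rule continuous_map_compose[OF continuous_map_compose[OF cont_Xinv[OF n] hm'c] sc])
      then show ?thesis unfolding \<sigma>0_def o_def .
    qed
    have p0: "p (\<sigma>0 w) = w" if w: "w \<in> Dn n" for w
    proof -
      have xi: "Xinv w \<in> cball 0 1" "X_cell n (Xinv w) = w" using Dn_mem[OF n w] by auto
      have "hm' (Xinv w) \<in> {0..1} \<times> {0..1}" using hom xi(1) unfolding homeomorphism_def by blast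
      then show ?thesis unfolding \<sigma>0_def using sp hmhm'[OF xi(1)] xi(2) by simp
    qed
    have oD: "X_origin \<in> Dn n" by (rule origin_Dn)
    have s0in: "\<sigma>0 X_origin \<in> topspace TP"
      using continuous_map_image_subset_topspace[OF c0] oD tsY Dn_sub[OF n] by auto
    define k where "k = dv (\<sigma>0 X_origin) (sV X_origin)"
    have kG: "k \<in> G" and ak: "act (\<sigma>0 X_origin) k = sV X_origin"
      unfolding k_def using dv_props[OF s0in sVin] p0[OF oD] psVo by auto
    define \<sigma> where "\<sigma> w = act (\<sigma>0 w) k" for w
    have "continuous_map (subtopology X_crs (Dn n)) TP \<sigma>"
      unfolding \<sigma>_def by (rule cm_act[OF c0]) (simp add: kG)
    moreover have "\<forall>w\<in>Dn n. p (\<sigma> w) = w"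
    proof
      fix w assume w: "w \<in> Dn n"
      have "\<sigma>0 w \<in> topspace TP"
        using continuous_map_image_subset_topspace[OF c0] w tsY Dn_sub[OF n] by auto
      then show "p (\<sigma> w) = w" unfolding \<sigma>_def using p_act kG p0[OF w] by simp
    qed
    moreover have "\<sigma> X_origin = sV X_origin" unfolding \<sigma>_def using ak .
    ultimately show ?thesis by blast
  qed
  then have "\<forall>n\<in>N. \<exists>\<sigma>. continuous_map (subtopology X_crs (Dn n)) TP \<sigma> \<and> (\<forall>w\<in>Dn n. p (\<sigma> w) = w)
      \<and> \<sigma> X_origin = sV X_origin" using N1 by blast
  then obtain \<Sigma> where \<Sigma>: "\<forall>n\<in>N. continuous_map (subtopology X_crs (Dn n)) TP (\<Sigma> n) \<and> (\<forall>w\<in>Dn n. p (\<Sigma> n w) = w)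
      \<and> \<Sigma> n X_origin = sV X_origin" by (metis (no_types, lifting) bchoice)
  have C0V: "C0 N \<subseteq> V"
  proof
    fix x assume x: "x \<in> C0 N"
    then have xX: "x \<in> X_set" unfolding C0_def by blast
    show "x \<in> V"
    proof (cases "x = X_origin")
      case True then show ?thesis using oV by simp
    next
      case False
      then obtain m z where mz: "x = X_cell m z" "1 \<le> m" "z \<in> cball 0 1" "z \<noteq> 1"
        using X_set_char[OF xX] by blast
      have xD: "x \<in> Dn m" unfolding Dn_def using mz by blast
      have "m \<notin> N" using x xD False unfolding C0_def by blast
      then have "m \<notin> N0" using mz(2) unfolding N_def by blast
      then show ?thesis using DnV[OF mz(2)] xD by blast
    qed
  qed
  define T where "T i = (if i = 0 then C0 N else Dn i)" for i
  define fs where "fs i = (if i = 0 then sV else \<Sigma> i)" for i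
  have N0n: "0 \<notin> N" using N1 by auto
  obtain \<sigma> where \<sigma>c: "continuous_map X_crs TP \<sigma>"
    and \<sigma>eq: "\<And>x i. i \<in> insert 0 N \<Longrightarrow> x \<in> topspace X_crs \<inter> T i \<Longrightarrow> \<sigma> x = fs i x"
  proof (rule pasting_lemma_exists_closed[of "insert 0 N" X_crs T TP fs])
    show "finite (insert 0 N)" using finN by simp
    show "topspace X_crs \<subseteq> \<Union> (T ` insert 0 N)"
    proof
      fix x assume x: "x \<in> topspace X_crs"
      show "x \<in> \<Union> (T ` insert 0 N)"
      proof (cases "x \<in> C0 N")
        case True then show ?thesis unfolding T_def by force
      next
        case False
        then obtain n where n: "n \<in> N" "x \<in> Dn n" using x tsY unfolding C0_def by blast
        then have "n \<noteq> 0" using N0n by (metis)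
        then have "x \<in> T n" unfolding T_def using n by simp
        then show ?thesis using n(1) by blast
      qed
    qed
    show "\<And>i. i \<in> insert 0 N \<Longrightarrow> closedin X_crs (T i)"
      unfolding T_def using C0_closed[OF N1] Dn_closed N1 by auto
    show "\<And>i. i \<in> insert 0 N \<Longrightarrow> continuous_map (subtopology X_crs (T i)) TP (fs i)"
    proof -
      fix i assume i: "i \<in> insert 0 N"
      show "continuous_map (subtopology X_crs (T i)) TP (fs i)"
      proof (cases "i = 0")
        case True
        then show ?thesis unfolding T_def fs_def using continuous_map_from_subtopology_mono[OF sVc C0V] by simp
      next
        case False
        then have "i \<in> N" using i by blast
        then show ?thesis unfolding T_def fs_def using False \<Sigma> by simp
      qed
    qed
    show "\<And>i j x. i \<in> insert 0 N \<Longrightarrow> j \<in> insert 0 N \<Longrightarrow> x \<in> topspace X_crs \<inter> T i \<inter> T j \<Longrightarrow> fs i x = fs j x"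
    proof -
      fix i j x assume i: "i \<in> insert 0 N" and j: "j \<in> insert 0 N" and x: "x \<in> topspace X_crs \<inter> T i \<inter> T j"
      have val: "fs k x = sV x" if k: "k \<in> insert 0 N" and xo: "x = X_origin" for k
        unfolding fs_def using \<Sigma> k xo by auto
      show "fs i x = fs j x"
      proof (cases "i = j")
        case True then show ?thesis by simp
      next
        case False
        have "x = X_origin"
        proof (cases "i = 0 \<or> j = 0")
          case True
          then obtain n where "n \<in> N" "x \<in> C0 N" "x \<in> Dn n" using x i j False unfolding T_def by auto
          then show ?thesis unfolding C0_def by blast
        next
          case nz: False
          then have "i \<in> N" "j \<in> N" "x \<in> Dn i" "x \<in> Dn j" using i j x unfolding T_def by auto
          then show ?thesis using Dn_char N1 False by metis
        qed
        then show ?thesis using val i j by simp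
      qed
    qed
  qed blast
  have \<sigma>p: "p (\<sigma> y) = y" if y: "y \<in> topspace X_crs" for y
  proof (cases "y \<in> C0 N")
    case True
    have "\<sigma> y = sV y" using \<sigma>eq[of 0 y] y True unfolding T_def fs_def by simp
    moreover have "y \<in> topspace (subtopology X_crs V)" using y True C0V by auto
    ultimately show ?thesis using sVp by simp
  next
    case False
    then obtain n where n: "n \<in> N" "y \<in> Dn n" using y tsY unfolding C0_def by blast
    have nz: "n \<noteq> 0" using n(1) N0n by metis
    have "\<sigma> y = \<Sigma> n y" using \<sigma>eq[of n y] y n nz unfolding T_def fs_def by simp
    then show ?thesis using \<Sigma> n by simp
  qed
  show ?thesis unfolding trivial_bundle_def by (rule section_trivial[OF \<sigma>c \<sigma>p])
qed

end

lemma S1_group: "topological_group S1_top (*) inverse (1::complex)"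
proof -
  have ts: "topspace S1_top = sphere 0 1" unfolding S1_top_def by simp
  have nz: "\<And>a::complex. a \<in> sphere 0 1 \<Longrightarrow> a \<noteq> 0" by auto
  have cm: "continuous_map (prod_topology S1_top S1_top) S1_top (\<lambda>(a, b). a * b)"
    unfolding S1_top_def prod_topology_subtopology_eu continuous_map_subtopology_eu
  proof
    show "continuous_on (sphere 0 1 \<times> sphere 0 1) (\<lambda>(a::complex, b). a * b)"
      by (simp add: case_prod_unfold continuous_intros)
    show "(\<lambda>(a::complex, b). a * b) \<in> sphere 0 1 \<times> sphere 0 1 \<rightarrow> sphere 0 1"
      by (auto simp: norm_mult)
  qed
  have ci: "continuous_map S1_top S1_top inverse"
    unfolding S1_top_def continuous_map_subtopology_eu
  proof
    show "continuous_on (sphere (0::complex) 1) inverse"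
      by (rule continuous_on_inverse[OF continuous_on_id]) (use nz in blast)
    show "inverse \<in> sphere (0::complex) 1 \<rightarrow> sphere 0 1" by (auto simp: norm_inverse)
  qed
  show ?thesis
    unfolding topological_group_def ts
    using cm ci nz by (auto simp: norm_mult norm_inverse)
qed

theorem corollary3p3:
  fixes TG :: "'g topology" and m :: "'g \<Rightarrow> 'g \<Rightarrow> 'g" and i :: "'g \<Rightarrow> 'g" and e :: 'g
  shows "(\<forall>(TP :: 'p topology) p act.
            topological_group TG m i e \<and>
            principal_bundle TG m e TP X_crs p act \<and>
            numerable_bundle TG m TP X_crs p act
            \<longrightarrow> trivial_bundle TG m TP X_crs p act) \<and>
         (\<forall>(TP :: 'q topology) p act.
            principal_bundle S1_top (*) 1 TP X_crs p act \<and>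
            \<not> trivial_bundle S1_top (*) TP X_crs p act
            \<longrightarrow> \<not> numerable_bundle S1_top (*) TP X_crs p act)"
proof (intro conjI allI impI)
  fix TP :: "'p topology" and p act
  assume a: "topological_group TG m i e \<and> principal_bundle TG m e TP X_crs p act \<and> numerable_bundle TG m TP X_crs p act"
  have pbx: "pbX TG m i e TP p act" unfolding pbX_def pbundle_def using a by blast
  show "trivial_bundle TG m TP X_crs p act" using pbX.numerable_trivial[OF pbx] a by blast
next
  fix TP :: "'q topology" and p act
  assume a: "principal_bundle S1_top (*) 1 TP X_crs p act \<and> \<not> trivial_bundle S1_top (*) TP X_crs p act"
  have pbx: "pbX S1_top (*) inverse 1 TP p act" unfolding pbX_def pbundle_def using a S1_group by blast
  show "\<not> numerable_bundle S1_top (*) TP X_crs p act" using pbX.numerable_trivial[OF pbx] a by blast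
qed

end
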